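(* For every finite non-empty set $S \subseteq \mathbb{R}^m$, we have \[ |\mathcal{D}(\mathrm{pyr}(S))| = |\mathcal{D}(S)| + 2|S| \quad\text{and}\quad \Delta(\mathcal{D}(\mathrm{pyr}(S))) = \Delta(\mathcal{D}(S)). \]
   Context: For a finite set $S\subseteq\mathbb{R}^m$, its difference set is $\mathcal{D}(S) = S - S = \{a-b : a,b\in S\}$, and its pyramid is $\mathrm{pyr}(S) = (S\times\{0\})\cup\{e_{m+1}\}\subseteq\mathbb{R}^{m+1}$, where $e_{m+1}$ is the $(m+1)$-st unit vector. For a finite set $T\subseteq\mathbb{R}^d$, $\Delta(T) = \max\{|\det(T')| : T'\subseteq T,\ |T'|=d\}$, where $\det(T')$ is the determinant of the $d\times d$ matrix whose columns are the elements of $T'$ (so $\Delta(\mathcal{D}(S))$ is taken in dimension $m$ and $\Delta(\mathcal{D}(\mathrm{pyr}(S)))$ in dimension $m+1$). *)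

theory Defs
  imports Complex_Main "Jordan_Normal_Form.Determinant"
begin

text \<open>Points of R^k are modelled as functions nat => real vanishing at all indices >= k.\<close>

definition in_Rn :: "nat \<Rightarrow> (nat \<Rightarrow> real) \<Rightarrow> bool" where
  "in_Rn k x \<longleftrightarrow> (\<forall>i\<ge>k. x i = 0)"

definition diffset :: "(nat \<Rightarrow> real) set \<Rightarrow> (nat \<Rightarrow> real) set" where
  "diffset S = {a - b | a b. a \<in> S \<and> b \<in> S}"

text \<open>Unit vector e_{m+1} of R^(m+1) (0-based index m).\<close>
definition unitvec :: "nat \<Rightarrow> (nat \<Rightarrow> real)" where
  "unitvec m = (\<lambda>i. if i = m then 1 else 0)"

definition pyr :: "nat \<Rightarrow> (nat \<Rightarrow> real) set \<Rightarrow> (nat \<Rightarrow> real) set" where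
  "pyr m S = ((\<lambda>x. x(m := 0)) ` S) \<union> {unitvec m}"

definition coldet :: "nat \<Rightarrow> (nat \<Rightarrow> (nat \<Rightarrow> real)) \<Rightarrow> real" where
  "coldet d f = det (mat d d (\<lambda>(i, j). f j i))"

text \<open>Delta(T) in dimension d: max |det T'| over d-element subsets T' of T,
  enumerated injectively by {..<d}; the absolute value is independent of the ordering.
  Convention: 0 if T has fewer than d elements.\<close>
definition Delta :: "nat \<Rightarrow> (nat \<Rightarrow> real) set \<Rightarrow> real" where
  "Delta d T = Max (insert 0 {\<bar>coldet d f\<bar> | f. inj_on f {..<d} \<and> f ` {..<d} \<subseteq> T})"

end

theory Submission
  imports Defs
begin

lemma coldet_cong:
  assumes "\<And>i j. i < n \<Longrightarrow> j < n \<Longrightarrow> f j i = g j i"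
  shows "coldet n f = coldet n g"
proof -
  have "mat n n (\<lambda>(i, j). f j i) = mat n n (\<lambda>(i, j). g j i)"
    by (rule eq_matI) (auto simp: assms)
  thus ?thesis unfolding coldet_def by simp
qed

lemma coldet_colop:
  assumes k: "k < n"
  shows "coldet n (\<lambda>j. if j \<noteq> k \<and> j < t then (\<lambda>i. f j i - c j * f k i) else f j) = coldet n f"
proof (induction t)
  case 0
  then show ?case by simp
next
  case (Suc t)
  let ?h = "\<lambda>t j. if j \<noteq> k \<and> j < t then (\<lambda>i. f j i - c j * f k i) else f j"
  show ?case
  proof (cases "t = k \<or> t \<ge> n")
    case True
    have "coldet n (?h (Suc t)) = coldet n (?h t)"
      by (rule coldet_cong) (use True in auto)
    then show ?thesis using Suc by simp
  next
    case False
    have "mat n n (\<lambda>(i, j). ?h (Suc t) j i) = addcol (- c t) t k (mat n n (\<lambda>(i, j). ?h t j i))"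
      by (rule eq_matI) (use False k in auto)
    hence "coldet n (?h (Suc t)) = coldet n (?h t)"
      unfolding coldet_def using False k by (simp del: det_addcol) (rule det_addcol, auto)
    then show ?thesis using Suc by simp
  qed
qed

lemma coldet_lastrow:
  assumes k: "k \<le> n" and z: "\<And>j. j \<le> n \<Longrightarrow> j \<noteq> k \<Longrightarrow> g j n = 0"
  shows "coldet (Suc n) g = g k n * (-1)^(n+k) * coldet n (\<lambda>j. g (if j < k then j else Suc j))"
proof -
  let ?A = "mat (Suc n) (Suc n) (\<lambda>(i, j). g j i)"
  have "coldet (Suc n) g = (\<Sum>j<Suc n. ?A $$ (n,j) * cofactor ?A n j)"
    unfolding coldet_def by (rule laplace_expansion_row) auto
  also have "\<dots> = ?A $$ (n,k) * cofactor ?A n k"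
  proof -
    have "(\<Sum>j<Suc n. ?A $$ (n,j) * cofactor ?A n j) = ?A $$ (n,k) * cofactor ?A n k
       + (\<Sum>j\<in>{..<Suc n} - {k}. ?A $$ (n,j) * cofactor ?A n j)"
      by (rule sum.remove) (use k in auto)
    also have "(\<Sum>j\<in>{..<Suc n} - {k}. ?A $$ (n,j) * cofactor ?A n j) = 0"
      by (rule sum.neutral) (use z in auto)
    finally show ?thesis by simp
  qed
  also have "?A $$ (n,k) = g k n" using k by simp
  also have "cofactor ?A n k = (-1)^(n+k) * coldet n (\<lambda>j. g (if j < k then j else Suc j))"
  proof -
    have "mat_delete ?A n k = mat n n (\<lambda>(i, j). g (if j < k then j else Suc j) i)"
      unfolding mat_delete_def by (rule eq_matI) (use k in auto)
    thus ?thesis unfolding cofactor_def coldet_def by simp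
  qed
  finally show ?thesis by simp
qed

lemma coldet_zerorow:
  assumes z: "\<And>j. j \<le> n \<Longrightarrow> g j n = 0"
  shows "coldet (Suc n) g = 0"
proof -
  let ?A = "mat (Suc n) (Suc n) (\<lambda>(i, j). g j i)"
  have "coldet (Suc n) g = (\<Sum>j<Suc n. ?A $$ (n,j) * cofactor ?A n j)"
    unfolding coldet_def by (rule laplace_expansion_row) auto
  also have "\<dots> = 0" using z by simp
  finally show ?thesis .
qed

lemma coldet_noninj:
  assumes "\<not> inj_on g {..<n}"
  shows "coldet n g = 0"
proof -
  obtain a b where ab: "a < n" "b < n" "a \<noteq> b" "g a = g b" using assms unfolding inj_on_def by auto
  show ?thesis unfolding coldet_def
    by (rule det_identical_columns[of _ n a b]) (use ab in auto)
qed

lemma Delta_fin: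
  assumes "finite T"
  shows "finite {\<bar>coldet d f\<bar> | f. inj_on f {..<d} \<and> f ` {..<d} \<subseteq> T}"
proof -
  have "{\<bar>coldet d f\<bar> | f. inj_on f {..<d} \<and> f ` {..<d} \<subseteq> T} \<subseteq>
        (\<lambda>g. \<bar>coldet d g\<bar>) ` (PiE {..<d} (\<lambda>_. T))"
  proof
    fix x assume "x \<in> {\<bar>coldet d f\<bar> | f. inj_on f {..<d} \<and> f ` {..<d} \<subseteq> T}"
    then obtain f where f: "x = \<bar>coldet d f\<bar>" "f ` {..<d} \<subseteq> T" by auto
    have "coldet d f = coldet d (restrict f {..<d})" by (rule coldet_cong) auto
    moreover have "restrict f {..<d} \<in> PiE {..<d} (\<lambda>_. T)" using f by auto
    ultimately show "x \<in> (\<lambda>g. \<bar>coldet d g\<bar>) ` (PiE {..<d} (\<lambda>_. T))" using f by auto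
  qed
  moreover have "finite (PiE {..<d} (\<lambda>_. T))" using assms by (simp add: finite_PiE)
  ultimately show ?thesis by (meson finite_imageI finite_subset)
qed

lemma Delta_ge:
  assumes "finite T" "inj_on f {..<d}" "f ` {..<d} \<subseteq> T"
  shows "\<bar>coldet d f\<bar> \<le> Delta d T"
  unfolding Delta_def by (rule Max_ge) (use Delta_fin[OF assms(1)] assms in auto)

lemma Delta_nonneg:
  assumes "finite T"
  shows "0 \<le> Delta d T"
  unfolding Delta_def by (rule Max_ge) (use Delta_fin[OF assms(1)] in auto)

lemma Delta_le:
  assumes "finite T" "0 \<le> c" "\<And>f. inj_on f {..<d} \<Longrightarrow> f ` {..<d} \<subseteq> T \<Longrightarrow> \<bar>coldet d f\<bar> \<le> c"
  shows "Delta d T \<le> c"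
  unfolding Delta_def by (rule Max.boundedI) (use Delta_fin[OF assms(1)] assms in auto)


lemma finite_diffset: "finite S \<Longrightarrow> finite (diffset S)"
proof -
  assume "finite S"
  have "diffset S = (\<lambda>(a,b). a - b) ` (S \<times> S)" unfolding diffset_def by auto
  thus ?thesis using \<open>finite S\<close> by simp
qed

lemma memD: "a \<in> S \<Longrightarrow> b \<in> S \<Longrightarrow> a - b \<in> diffset S"
  unfolding diffset_def by auto

theorem lemma5p4:
  fixes m :: nat and S :: "(nat \<Rightarrow> real) set"
  assumes "finite S" and "S \<noteq> {}" and "\<forall>x\<in>S. in_Rn m x"
  shows "card (diffset (pyr m S)) = card (diffset S) + 2 * card S
    \<and> Delta (Suc m) (diffset (pyr m S)) = Delta m (diffset S)"
proof -
  define e where "e = unitvec m"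
  define D where "D = diffset S"
  define D' where "D' = diffset (pyr m S)"
  have Sz: "\<And>x i. x \<in> S \<Longrightarrow> i \<ge> m \<Longrightarrow> x i = 0" using assms(3) unfolding in_Rn_def by auto
  have em: "e m = 1" unfolding e_def unitvec_def by simp
  have pyr_eq: "pyr m S = insert e S"
  proof -
    have "(\<lambda>x. x(m := 0)) ` S = S"
    proof -
      have "\<And>x. x \<in> S \<Longrightarrow> x(m := 0) = x" using Sz by (auto simp: fun_eq_iff)
      thus ?thesis by simp
    qed
    thus ?thesis unfolding pyr_def e_def by auto
  qed
  obtain s0 where s0: "s0 \<in> S" using assms(2) by auto
  have finD: "finite D" unfolding D_def using assms(1) by (rule finite_diffset)
  have finD': "finite D'" unfolding D'_def using assms(1) by (intro finite_diffset) (simp add: pyr_eq)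
  have Dz: "\<And>v i. v \<in> D \<Longrightarrow> i \<ge> m \<Longrightarrow> v i = 0"
  proof -
    fix v i assume "v \<in> D" "i \<ge> m"
    then obtain a b where "v = a - b" "a \<in> S" "b \<in> S" unfolding D_def diffset_def by auto
    thus "v i = 0" using Sz[of a i] Sz[of b i] \<open>i \<ge> m\<close> by simp
  qed
  have D'_eq: "D' = D \<union> (\<lambda>s. e - s) ` S \<union> (\<lambda>s. s - e) ` S"
  proof
    show "D' \<subseteq> D \<union> (\<lambda>s. e - s) ` S \<union> (\<lambda>s. s - e) ` S"
    proof
      fix v assume "v \<in> D'"
      then obtain a b where ab: "v = a - b" "a \<in> insert e S" "b \<in> insert e S"
        unfolding D'_def pyr_eq diffset_def by auto
      show "v \<in> D \<union> (\<lambda>s. e - s) ` S \<union> (\<lambda>s. s - e) ` S"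
      proof (cases "a = e")
        case True
        then show ?thesis
        proof (cases "b = e")
          case True
          then have "v = s0 - s0" using ab \<open>a = e\<close> by (simp add: fun_eq_iff)
          then show ?thesis using s0 memD unfolding D_def by blast
        next
          case False
          then show ?thesis using ab True by auto
        qed
      next
        case False
        then show ?thesis using ab memD unfolding D_def by auto
      qed
    qed
  next
    show "D \<union> (\<lambda>s. e - s) ` S \<union> (\<lambda>s. s - e) ` S \<subseteq> D'"
      unfolding D'_def D_def pyr_eq using memD[of _ "insert e S"] diffset_def
      by (auto simp: diffset_def)
  qed
  have card_part: "card D' = card D + 2 * card S"
  proof -
    have d1: "D \<inter> (\<lambda>s. e - s) ` S = {}"
    proof -
      have "e - s \<notin> D" if "s \<in> S" for s
      proof
        assume "e - s \<in> D"
        hence "(e - s) m = 0" using Dz[of "e - s" m] by blast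
        thus False using Sz[OF that, of m] em by simp
      qed
      thus ?thesis by auto
    qed
    have d2: "(D \<union> (\<lambda>s. e - s) ` S) \<inter> (\<lambda>s. s - e) ` S = {}"
    proof -
      have "\<And>s t. s \<in> S \<Longrightarrow> t \<in> S \<Longrightarrow> e - s \<noteq> t - e"
      proof
        fix s t assume "s \<in> S" "t \<in> S" "e - s = t - e"
        hence "(e - s) m = (t - e) m" by simp
        thus False using Sz[OF \<open>s \<in> S\<close>, of m] Sz[OF \<open>t \<in> S\<close>, of m] em by simp
      qed
      moreover have "s - e \<notin> D" if "s \<in> S" for s
      proof
        assume "s - e \<in> D"
        hence "(s - e) m = 0" using Dz[of "s - e" m] by blast
        thus False using Sz[OF that, of m] em by simp
      qed
      ultimately show ?thesis by blast
    qed
    have i1: "inj_on (\<lambda>s. e - s) S" by (rule inj_onI) (simp add: fun_eq_iff)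
    have i2: "inj_on (\<lambda>s. s - e) S" by (rule inj_onI) (simp add: fun_eq_iff)
    have X: "card D' = card (D \<union> (\<lambda>s. e - s) ` S) + card ((\<lambda>s. s - e) ` S)"
      unfolding D'_eq by (rule card_Un_disjoint) (use finD assms(1) d2 in auto)
    have Y: "card (D \<union> (\<lambda>s. e - s) ` S) = card D + card ((\<lambda>s. e - s) ` S)"
      by (rule card_Un_disjoint) (use finD assms(1) d1 in auto)
    show ?thesis using X Y card_image[OF i1] card_image[OF i2] by linarith
  qed
  have D'cases: "\<And>v. v \<in> D' \<Longrightarrow> v \<in> D \<or> (\<exists>s\<in>S. v = e - s) \<or> (\<exists>s\<in>S. v = s - e)"
    unfolding D'_eq by auto
  have le1: "Delta (Suc m) D' \<le> Delta m D"
  proof (rule Delta_le[OF finD' Delta_nonneg[OF finD]])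
    fix f assume finj: "inj_on f {..<Suc m}" and fD: "f ` {..<Suc m} \<subseteq> D'"
    show "\<bar>coldet (Suc m) f\<bar> \<le> Delta m D"
    proof (cases "\<forall>j\<le>m. f j m = 0")
      case True
      then show ?thesis using coldet_zerorow[of m f] Delta_nonneg[OF finD] by simp
    next
      case False
      then obtain k where k: "k \<le> m" "f k m \<noteq> 0" by auto
      define \<sigma> where "\<sigma> = f k m"
      define c where "c = (\<lambda>j. f j m * \<sigma>)"
      define H where "H = (\<lambda>j. if j \<noteq> k \<and> j < Suc m then (\<lambda>i. f j i - c j * f k i) else f j)"
      have fkD': "f k \<in> D'" using fD k by auto
      have fk: "(\<exists>s\<in>S. f k = e - s \<and> \<sigma> = 1) \<or> (\<exists>s\<in>S. f k = s - e \<and> \<sigma> = -1)"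
      proof -
        have "f k \<notin> D" using Dz[of "f k" m] k(2) by auto
        then consider (a) s where "s \<in> S" "f k = e - s" | (b) s where "s \<in> S" "f k = s - e"
          using D'cases[OF fkD'] by blast
        thus ?thesis
        proof cases
          case a
          then show ?thesis using Sz[of s m] em unfolding \<sigma>_def by auto
        next
          case b
          then show ?thesis using Sz[of s m] em unfolding \<sigma>_def by auto
        qed
      qed
      have HD: "H j \<in> D" if j: "j \<le> m" "j \<noteq> k" for j
      proof -
        have fjD': "f j \<in> D'" using fD j by auto
        have Hj: "H j = (\<lambda>i. f j i - f j m * \<sigma> * f k i)" unfolding H_def c_def using j by auto
        from D'cases[OF fjD'] show ?thesis
        proof (elim disjE bexE)
          assume "f j \<in> D"
          thus ?thesis using Hj Dz[of "f j" m] by simp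
        next
          fix a assume a: "a \<in> S" "f j = e - a"
          from fk show ?thesis
          proof (elim disjE bexE conjE)
            fix b assume b: "b \<in> S" "f k = e - b" "\<sigma> = 1"
            have "H j = b - a" using Hj a b em Sz[of a m] by (auto simp: fun_eq_iff)
            thus ?thesis using memD[OF b(1) a(1)] D_def by simp
          next
            fix b assume b: "b \<in> S" "f k = b - e" "\<sigma> = -1"
            have "H j = b - a" using Hj a b em Sz[of a m] by (auto simp: fun_eq_iff)
            thus ?thesis using memD[OF b(1) a(1)] D_def by simp
          qed
        next
          fix a assume a: "a \<in> S" "f j = a - e"
          from fk show ?thesis
          proof (elim disjE bexE conjE)
            fix b assume b: "b \<in> S" "f k = e - b" "\<sigma> = 1"
            have "H j = a - b" using Hj a b em Sz[of a m] by (auto simp: fun_eq_iff)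
            thus ?thesis using memD[OF a(1) b(1)] D_def by simp
          next
            fix b assume b: "b \<in> S" "f k = b - e" "\<sigma> = -1"
            have "H j = a - b" using Hj a b em Sz[of a m] by (auto simp: fun_eq_iff)
            thus ?thesis using memD[OF a(1) b(1)] D_def by simp
          qed
        qed
      qed
      have "coldet (Suc m) H = coldet (Suc m) f"
        unfolding H_def by (rule coldet_colop) (use k in auto)
      moreover have "coldet (Suc m) H = H k m * (-1)^(m+k) * coldet m (\<lambda>j. H (if j < k then j else Suc j))"
        by (rule coldet_lastrow) (use k HD Dz in auto)
      moreover have "H k m = \<sigma>" unfolding H_def \<sigma>_def by simp
      moreover have "\<bar>\<sigma>\<bar> = 1" using fk by auto
      moreover have "\<bar>coldet m (\<lambda>j. H (if j < k then j else Suc j))\<bar> \<le> Delta m D"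
      proof (cases "inj_on (\<lambda>j. H (if j < k then j else Suc j)) {..<m}")
        case True
        show ?thesis
          by (rule Delta_ge[OF finD True]) (use HD k in auto)
      next
        case False
        then show ?thesis using coldet_noninj Delta_nonneg[OF finD] by simp
      qed
      ultimately have "\<bar>coldet (Suc m) f\<bar> = \<bar>\<sigma>\<bar> * \<bar>(-1::real)^(m+k)\<bar> * \<bar>coldet m (\<lambda>j. H (if j < k then j else Suc j))\<bar>
          \<and> \<bar>coldet m (\<lambda>j. H (if j < k then j else Suc j))\<bar> \<le> Delta m D \<and> \<bar>\<sigma>\<bar> = 1"
        by (metis abs_mult)
      thus ?thesis by (simp add: power_abs)
    qed
  qed
  have le2: "Delta m D \<le> Delta (Suc m) D'"
  proof (rule Delta_le[OF finD Delta_nonneg[OF finD']])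
    fix g assume ginj: "inj_on g {..<m}" and gD: "g ` {..<m} \<subseteq> D"
    define f where "f = g(m := e - s0)"
    have fm: "f m = e - s0" unfolding f_def by simp
    have fmm: "f m m = 1" using fm em Sz[OF s0, of m] by simp
    have gm: "\<And>j. j < m \<Longrightarrow> g j m = 0" using gD Dz by auto
    have "coldet (Suc m) f = f m m * (-1)^(m+m) * coldet m (\<lambda>j. f (if j < m then j else Suc j))"
      by (rule coldet_lastrow) (use gm in \<open>auto simp: f_def\<close>)
    also have "coldet m (\<lambda>j. f (if j < m then j else Suc j)) = coldet m g"
      by (rule coldet_cong) (auto simp: f_def)
    finally have eq: "coldet (Suc m) f = coldet m g" using fmm by simp
    have "inj_on f {..<Suc m}"
    proof -
      have "f m \<notin> f ` {..<m}"
      proof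
        assume "f m \<in> f ` {..<m}"
        then obtain x where x: "x < m" "f m = f x" by auto
        hence "f m m = g x m" by (simp add: f_def)
        thus False using gm[OF x(1)] fmm by simp
      qed
      moreover have "inj_on f {..<m}" using ginj unfolding f_def inj_on_def by auto
      ultimately show ?thesis by (simp add: lessThan_Suc)
    qed
    moreover have "f ` {..<Suc m} \<subseteq> D'"
      using gD s0 unfolding D'_eq by (auto simp: f_def lessThan_Suc)
    ultimately show "\<bar>coldet m g\<bar> \<le> Delta (Suc m) D'"
      using Delta_ge[OF finD'] eq by metis
  qed
  show ?thesis using card_part le1 le2 unfolding D_def D'_def by simp
qed

end
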